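(* Let $N\in\mathbb{N}$, $N\geqslant 2$, and let $f:[0,1]\times\mathbb{R}\to\mathbb{R}$ satisfy: (C(c)) $f$ is continuous on $[0,1]\times\mathbb{R}$ and has a continuous partial derivative $f_x$ with respect to the second variable; (D(f)) there exist positive constants $A,B$ with $A<1$ such that $|f(t,x)|\leqslant A|x|+B$ for all $t\in[0,1]$, $x\in\mathbb{R}$; (D($f_x$)) $\inf_{[0,1]\times\mathbb{R}} f_x>-1$. Then the operator $D_N:(\mathbb{E}_N,\|\cdot\|_{\mathbb{E}_N})\to(\mathbb{E}_N,\|\cdot\|_N)$ is a diffeomorphism.
   Context: $\mathbb{E}_N$ is the space of functions $x:\{0,1,\dots,N\}\to\mathbb{R}$ with $x(0)=x(N)=0$ (extended by $x(k)=0$ for $k\notin\{0,\dots,N\}$). $\Delta x(k-1)=x(k)-x(k-1)$, $\Delta^2 x(k-1)=x(k+1)-2x(k)+x(k-1)$. Norms: $\|x\|_N=(\sum_{i=1}^{N-1}|x(i)|^2)^{1/2}$, $\|x\|_{\mathbb{E}_N}=(\sum_{i=1}^{N-1}|\Delta^2x(i-1)|^2)^{1/2}$. The operator $D_N$ is defined by $(D_Nx)(k)=\Delta^2x(k-1)-\frac{1}{N^2}f(\frac{k}{N},x(k))$ for $k=1,\dots,N-1$ and $(D_Nx)(0)=(D_Nx)(N)=0$. A diffeomorphism is a $C^1$ bijection with $C^1$ inverse. *)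

theory Defs
  imports "HOL-Analysis.Analysis"
begin

text \<open>The space E_N: functions on nat vanishing at 0 and at every k >= N
  (i.e. x(0) = x(N) = 0, extended by zero outside {0..N}).\<close>
definition EN :: "nat \<Rightarrow> (nat \<Rightarrow> real) set" where
  "EN N = {x. \<forall>k. (k = 0 \<or> N \<le> k) \<longrightarrow> x k = 0}"

text \<open>delta2 x k denotes Delta^2 x(k-1) = x(k+1) - 2 x(k) + x(k-1).\<close>
definition delta2 :: "(nat \<Rightarrow> real) \<Rightarrow> nat \<Rightarrow> real" where
  "delta2 x k = x (Suc k) - 2 * x k + x (k - 1)"

definition normN :: "nat \<Rightarrow> (nat \<Rightarrow> real) \<Rightarrow> real" where
  "normN N x = sqrt (\<Sum>i=1..N-1. (x i)\<^sup>2)"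

definition normEN :: "nat \<Rightarrow> (nat \<Rightarrow> real) \<Rightarrow> real" where
  "normEN N x = sqrt (\<Sum>i=1..N-1. (delta2 x i)\<^sup>2)"

definition DN :: "nat \<Rightarrow> (real \<Rightarrow> real \<Rightarrow> real) \<Rightarrow> (nat \<Rightarrow> real) \<Rightarrow> (nat \<Rightarrow> real)" where
  "DN N f x = (\<lambda>k. if 1 \<le> k \<and> k \<le> N - 1
      then delta2 x k - f (real k / real N) (x k) / (real N)\<^sup>2 else 0)"

definition lin_on :: "(nat \<Rightarrow> real) set \<Rightarrow> ((nat \<Rightarrow> real) \<Rightarrow> (nat \<Rightarrow> real)) \<Rightarrow> bool" where
  "lin_on S L \<longleftrightarrow> (\<forall>h\<in>S. L h \<in> S) \<and>
     (\<forall>h\<in>S. \<forall>g\<in>S. L (\<lambda>k. h k + g k) = (\<lambda>k. L h k + L g k)) \<and>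
     (\<forall>h\<in>S. \<forall>c::real. L (\<lambda>k. c * h k) = (\<lambda>k. c * L h k))"

definition has_deriv_on ::
  "((nat \<Rightarrow> real) \<Rightarrow> real) \<Rightarrow> ((nat \<Rightarrow> real) \<Rightarrow> real) \<Rightarrow> (nat \<Rightarrow> real) set \<Rightarrow>
   ((nat \<Rightarrow> real) \<Rightarrow> (nat \<Rightarrow> real)) \<Rightarrow> ((nat \<Rightarrow> real) \<Rightarrow> (nat \<Rightarrow> real)) \<Rightarrow> (nat \<Rightarrow> real) \<Rightarrow> bool" where
  "has_deriv_on n1 n2 S F L x \<longleftrightarrow> lin_on S L \<and>
     (\<forall>e>0. \<exists>d>0. \<forall>h\<in>S. n1 h < d \<longrightarrow>
        n2 (\<lambda>k. F (\<lambda>j. x j + h j) k - F x k - L h k) \<le> e * n1 h)"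

definition opnorm ::
  "((nat \<Rightarrow> real) \<Rightarrow> real) \<Rightarrow> ((nat \<Rightarrow> real) \<Rightarrow> real) \<Rightarrow> (nat \<Rightarrow> real) set \<Rightarrow>
   ((nat \<Rightarrow> real) \<Rightarrow> (nat \<Rightarrow> real)) \<Rightarrow> real" where
  "opnorm n1 n2 S L = Sup {n2 (L h) | h. h \<in> S \<and> n1 h \<le> 1}"

definition C1_on ::
  "((nat \<Rightarrow> real) \<Rightarrow> real) \<Rightarrow> ((nat \<Rightarrow> real) \<Rightarrow> real) \<Rightarrow> (nat \<Rightarrow> real) set \<Rightarrow>
   ((nat \<Rightarrow> real) \<Rightarrow> (nat \<Rightarrow> real)) \<Rightarrow> bool" where
  "C1_on n1 n2 S F \<longleftrightarrow> (\<exists>F'. (\<forall>x\<in>S. has_deriv_on n1 n2 S F (F' x) x) \<and>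
     (\<forall>x\<in>S. \<forall>e>0. \<exists>d>0. \<forall>y\<in>S. n1 (\<lambda>k. y k - x k) < d \<longrightarrow>
        opnorm n1 n2 S (\<lambda>h k. F' y h k - F' x h k) \<le> e))"

definition diffeo_on ::
  "((nat \<Rightarrow> real) \<Rightarrow> real) \<Rightarrow> ((nat \<Rightarrow> real) \<Rightarrow> real) \<Rightarrow> (nat \<Rightarrow> real) set \<Rightarrow>
   ((nat \<Rightarrow> real) \<Rightarrow> (nat \<Rightarrow> real)) \<Rightarrow> bool" where
  "diffeo_on n1 n2 S F \<longleftrightarrow> bij_betw F S S \<and> C1_on n1 n2 S F \<and>
     C1_on n2 n1 S (inv_into S F)"

end

theory Submission
  imports Defs
begin

definition Op :: "nat \<Rightarrow> (nat \<Rightarrow> real \<Rightarrow> real) \<Rightarrow> (nat \<Rightarrow> real) \<Rightarrow> (nat \<Rightarrow> real)" where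
  "Op N g x = (\<lambda>k. if 1 \<le> k \<and> k \<le> N - 1 then delta2 x k - g k (x k) / (real N)\<^sup>2 else 0)"

lemma DN_Op: "DN N f = Op N (\<lambda>k. f (real k / real N))"
  by (simp add: DN_def Op_def fun_eq_iff)

lemma normN_L2: "normN N x = L2_set x {1..N-1}"
  by (simp add: normN_def L2_set_def)

lemma normEN_L2: "normEN N x = L2_set (delta2 x) {1..N-1}"
  by (simp add: normEN_def L2_set_def)

lemma EN_iff: "x \<in> EN N \<longleftrightarrow> (\<forall>k. (k = 0 \<or> N \<le> k) \<longrightarrow> x k = 0)"
  by (simp add: EN_def)

lemma Op_EN: "1 \<le> N \<Longrightarrow> Op N g x \<in> EN N"
  by (auto simp: EN_def Op_def)

lemma EN_out: "x \<in> EN N \<Longrightarrow> k \<notin> {1..N-1} \<Longrightarrow> x k = 0"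
  by (cases "k = 0") (auto simp: EN_def)

lemma EN_diff: "x \<in> EN N \<Longrightarrow> y \<in> EN N \<Longrightarrow> (\<lambda>k. x k - y k) \<in> EN N"
  by (auto simp: EN_def)
lemma EN_add: "x \<in> EN N \<Longrightarrow> y \<in> EN N \<Longrightarrow> (\<lambda>k. x k + y k) \<in> EN N"
  by (auto simp: EN_def)
lemma EN_scale: "x \<in> EN N \<Longrightarrow> (\<lambda>k. c * x k) \<in> EN N"
  by (auto simp: EN_def)
lemma EN_zero: "(\<lambda>k. 0) \<in> EN N"
  by (auto simp: EN_def)

lemma coord_le: "x \<in> EN N \<Longrightarrow> \<bar>x j\<bar> \<le> normN N x"
proof (cases "j \<in> {1..N-1}")
  case True
  then show ?thesis unfolding normN_L2
    using member_le_L2_set[of "{1..N-1}" j "\<lambda>i. \<bar>x i\<bar>"] by (simp add: L2_set_def)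
next
  case False
  assume "x \<in> EN N"
  then have "x j = 0" using EN_out[OF _ False] by blast
  then show ?thesis by (simp add: normN_L2)
qed

lemma normN_sq: "(normN N x)\<^sup>2 = (\<Sum>k\<in>{1..N-1}. (x k)\<^sup>2)"
  unfolding normN_def by (simp add: sum_nonneg)

lemma normN_le_sum: "normN N x \<le> (\<Sum>k\<in>{1..N-1}. \<bar>x k\<bar>)"
  unfolding normN_L2 by (rule L2_set_le_sum_abs)

lemma normEN_le_sum: "normEN N x \<le> (\<Sum>k\<in>{1..N-1}. \<bar>delta2 x k\<bar>)"
  unfolding normEN_L2 by (rule L2_set_le_sum_abs)

lemma CS: "(\<Sum>k\<in>{1..N-1}. x k * y k) \<le> normN N x * normN N y"
proof -
  have "(\<Sum>k\<in>{1..N-1}. x k * y k) \<le> (\<Sum>k\<in>{1..N-1}. \<bar>x k\<bar> * \<bar>y k\<bar>)"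
    by (intro sum_mono) (simp add: abs_mult[symmetric])
  also have "\<dots> \<le> normN N x * normN N y" unfolding normN_L2 by (rule L2_set_mult_ineq)
  finally show ?thesis .
qed

lemma sbp: "x 0 = 0 \<Longrightarrow> (\<Sum>k\<in>{1..n}. (- delta2 x k) * x k) =
   (\<Sum>i\<in>{1..n}. (x i - x (i - 1))\<^sup>2) + x n * (x n - x (Suc n))"
proof (induction n)
  case 0
  then show ?case by simp
next
  case (Suc n)
  then show ?case by (simp add: delta2_def power2_eq_square algebra_simps)
qed

lemma telesc: "(x::nat\<Rightarrow>real) 0 = 0 \<Longrightarrow> x k = (\<Sum>i\<in>{1..k}. x i - x (i - 1))"
  by (induction k) auto

lemma sq_sum_le: "finite A \<Longrightarrow> (\<Sum>i\<in>A. d i)\<^sup>2 \<le> real (card A) * (\<Sum>i\<in>A. (d i)\<^sup>2)"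
proof -
  assume fA: "finite A"
  have "(\<Sum>i\<in>A. d i) \<le> (\<Sum>i\<in>A. \<bar>(1::real)\<bar> * \<bar>d i\<bar>)" by (intro sum_mono) auto
  also have "\<dots> \<le> L2_set (\<lambda>_. 1) A * L2_set d A" by (rule L2_set_mult_ineq)
  finally have a: "(\<Sum>i\<in>A. d i) \<le> L2_set (\<lambda>_. 1) A * L2_set d A" .
  have "- (\<Sum>i\<in>A. d i) \<le> (\<Sum>i\<in>A. \<bar>(1::real)\<bar> * \<bar>d i\<bar>)"
    by (simp add: sum_negf[symmetric]) (intro sum_mono, auto)
  also have "\<dots> \<le> L2_set (\<lambda>_. 1) A * L2_set d A" by (rule L2_set_mult_ineq)
  finally have b: "- (\<Sum>i\<in>A. d i) \<le> L2_set (\<lambda>_. 1) A * L2_set d A" .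
  have "\<bar>\<Sum>i\<in>A. d i\<bar> \<le> L2_set (\<lambda>_. 1) A * L2_set d A" using a b by linarith
  then have "(\<Sum>i\<in>A. d i)\<^sup>2 \<le> (L2_set (\<lambda>_. 1) A * L2_set d A)\<^sup>2"
    by (metis abs_ge_zero power2_abs power_mono)
  also have "\<dots> = real (card A) * (\<Sum>i\<in>A. (d i)\<^sup>2)"
    by (simp add: L2_set_def power_mult_distrib sum_nonneg)
  finally show ?thesis .
qed

lemma poinc:
  assumes u: "u \<in> EN N" and N: "1 \<le> N"
  shows "(\<Sum>k\<in>{1..N-1}. (u k)\<^sup>2) \<le> (real N)\<^sup>2 * (\<Sum>k\<in>{1..N-1}. (- delta2 u k) * u k)"
proof -
  have u0: "u 0 = 0" and uN: "u N = 0" using u by (auto simp: EN_def)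
  define D where "D = (\<Sum>i\<in>{1..N-1}. (u i - u (i - 1))\<^sup>2)"
  have D0: "0 \<le> D" unfolding D_def by (simp add: sum_nonneg)
  have eq: "(\<Sum>k\<in>{1..N-1}. (- delta2 u k) * u k) = D + (u (N-1))\<^sup>2"
    using sbp[of u "N-1", OF u0] N uN by (simp add: D_def power2_eq_square)
  have each: "(u k)\<^sup>2 \<le> real N * D" if k: "k \<in> {1..N-1}" for k
  proof -
    have "(u k)\<^sup>2 = (\<Sum>i\<in>{1..k}. u i - u (i - 1))\<^sup>2" using telesc[of u k] u0 by simp
    also have "\<dots> \<le> real (card {1..k}) * (\<Sum>i\<in>{1..k}. (u i - u (i - 1))\<^sup>2)"
      by (rule sq_sum_le) simp
    also have "\<dots> \<le> real N * D"
    proof (rule mult_mono)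
      show "real (card {1..k}) \<le> real N" using k by simp arith
      show "(\<Sum>i\<in>{1..k}. (u i - u (i - 1))\<^sup>2) \<le> D"
        unfolding D_def using k by (intro sum_mono2) auto
    qed (auto simp: D0 sum_nonneg)
    finally show ?thesis .
  qed
  have "(\<Sum>k\<in>{1..N-1}. (u k)\<^sup>2) \<le> (\<Sum>k\<in>{1..N-1}. real N * D)"
    by (rule sum_mono) (rule each)
  also have "\<dots> = real (N - 1) * (real N * D)" by simp
  also have "\<dots> \<le> real N * (real N * D)"
    by (rule mult_right_mono) (use D0 in auto)
  also have "\<dots> \<le> (real N)\<^sup>2 * (D + (u (N-1))\<^sup>2)"
    by (simp add: power2_eq_square algebra_simps)
  finally show ?thesis using eq by simp
qed

lemma delta2_diff: "delta2 (\<lambda>k. x k - y k) k = delta2 x k - delta2 y k"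
  by (simp add: delta2_def)
lemma delta2_add: "delta2 (\<lambda>k. x k + y k) k = delta2 x k + delta2 y k"
  by (simp add: delta2_def)
lemma delta2_scale: "delta2 (\<lambda>k. c * x k) k = c * delta2 x k"
  by (simp add: delta2_def algebra_simps)

lemma normN_nonneg [simp]: "0 \<le> normN N x"
  by (simp add: normN_def sum_nonneg)
lemma normEN_nonneg [simp]: "0 \<le> normEN N x"
  by (simp add: normEN_def sum_nonneg)

lemma CS_L2: "(\<Sum>k\<in>{1..N-1}. a k * b k) \<le> L2_set a {1..N-1} * L2_set b {1..N-1}"
proof -
  have "(\<Sum>k\<in>{1..N-1}. a k * b k) \<le> (\<Sum>k\<in>{1..N-1}. \<bar>a k\<bar> * \<bar>b k\<bar>)"
    by (intro sum_mono) (simp add: abs_mult[symmetric])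
  also have "\<dots> \<le> L2_set a {1..N-1} * L2_set b {1..N-1}" by (rule L2_set_mult_ineq)
  finally show ?thesis .
qed

lemma E2:
  assumes u: "u \<in> EN N" and N: "1 \<le> N"
  shows "normN N u \<le> (real N)\<^sup>2 * normEN N u"
proof -
  have "(normN N u)\<^sup>2 \<le> (real N)\<^sup>2 * (\<Sum>k\<in>{1..N-1}. (- delta2 u k) * u k)"
    using poinc[OF u N] by (simp add: normN_sq)
  also have "\<dots> \<le> (real N)\<^sup>2 * (normEN N u * normN N u)"
  proof (rule mult_left_mono)
    have "(\<Sum>k\<in>{1..N-1}. (- delta2 u k) * u k) \<le> L2_set (\<lambda>k. - delta2 u k) {1..N-1} * L2_set u {1..N-1}"
      by (rule CS_L2)
    then show "(\<Sum>k\<in>{1..N-1}. (- delta2 u k) * u k) \<le> normEN N u * normN N u"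
      by (simp add: normEN_L2 normN_L2 L2_set_def)
  qed simp
  finally have *: "normN N u * normN N u \<le> ((real N)\<^sup>2 * normEN N u) * normN N u"
    by (simp add: power2_eq_square algebra_simps)
  show ?thesis
  proof (cases "normN N u = 0")
    case True
    then show ?thesis by simp
  next
    case False
    then have "0 < normN N u" using normN_nonneg[of N u] by linarith
    then show ?thesis using * by simp
  qed
qed

lemma E1:
  assumes u: "u \<in> EN N"
  shows "normEN N u \<le> 4 * real N * normN N u"
proof -
  have "normEN N u \<le> (\<Sum>k\<in>{1..N-1}. \<bar>delta2 u k\<bar>)" by (rule normEN_le_sum)
  also have "\<dots> \<le> (\<Sum>k\<in>{1..N-1}. 4 * normN N u)"
  proof (rule sum_mono)
    fix k
    have "\<bar>delta2 u k\<bar> \<le> \<bar>u (Suc k)\<bar> + 2 * \<bar>u k\<bar> + \<bar>u (k - 1)\<bar>"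
      by (simp add: delta2_def)
    also have "\<dots> \<le> 4 * normN N u" using coord_le[OF u, of "Suc k"] coord_le[OF u, of k] coord_le[OF u, of "k-1"]
      by simp
    finally show "\<bar>delta2 u k\<bar> \<le> 4 * normN N u" .
  qed
  also have "\<dots> = real (N - 1) * (4 * normN N u)" by simp
  also have "\<dots> \<le> 4 * real N * normN N u"
    using mult_right_mono[of "real (N-1)" "real N" "4 * normN N u"] by simp
  finally show ?thesis .
qed

lemma Qgen:
  assumes h: "h \<in> EN N" and N: "1 \<le> N"
    and q: "\<forall>k\<in>{1..N-1}. q k \<ge> m * (h k)\<^sup>2" and m: "m > -1"
  shows "(1 + m) / (real N)\<^sup>2 * (normN N h)\<^sup>2 \<le> (\<Sum>k\<in>{1..N-1}. (- delta2 h k) * h k + q k / (real N)\<^sup>2)"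
proof -
  have NN: "(real N)\<^sup>2 > 0" using N by simp
  have a: "(normN N h)\<^sup>2 / (real N)\<^sup>2 \<le> (\<Sum>k\<in>{1..N-1}. (- delta2 h k) * h k)"
    using poinc[OF h N] NN by (simp add: normN_sq divide_le_eq mult.commute)
  have b: "m * (normN N h)\<^sup>2 / (real N)\<^sup>2 \<le> (\<Sum>k\<in>{1..N-1}. q k / (real N)\<^sup>2)"
  proof -
    have "m * (normN N h)\<^sup>2 = (\<Sum>k\<in>{1..N-1}. m * (h k)\<^sup>2)" by (simp add: normN_sq sum_distrib_left)
    also have "\<dots> \<le> (\<Sum>k\<in>{1..N-1}. q k)" using q by (intro sum_mono) auto
    finally show ?thesis using NN by (simp add: sum_divide_distrib[symmetric] divide_right_mono)
  qed
  have "(1 + m) / (real N)\<^sup>2 * (normN N h)\<^sup>2 = (normN N h)\<^sup>2 / (real N)\<^sup>2 + m * (normN N h)\<^sup>2 / (real N)\<^sup>2"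
    by (simp add: add_divide_distrib distrib_right)
  also have "\<dots> \<le> (\<Sum>k\<in>{1..N-1}. (- delta2 h k) * h k) + (\<Sum>k\<in>{1..N-1}. q k / (real N)\<^sup>2)"
    using a b by linarith
  finally show ?thesis by (simp only: sum.distrib)
qed

lemma SM:
  assumes x: "x \<in> EN N" and y: "y \<in> EN N" and N: "1 \<le> N" and m: "m > -1"
    and mono: "\<forall>k\<in>{1..N-1}. (g k (x k) - g k (y k)) * (x k - y k) \<ge> m * (x k - y k)\<^sup>2"
  shows "(1 + m) / (real N)\<^sup>2 * normN N (\<lambda>k. x k - y k) \<le> normN N (\<lambda>k. Op N g x k - Op N g y k)"
proof -
  define h where "h = (\<lambda>k. x k - y k)"
  define r where "r = (\<lambda>k. Op N g x k - Op N g y k)"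
  have h: "h \<in> EN N" unfolding h_def using EN_diff[OF x y] .
  have "(1 + m) / (real N)\<^sup>2 * (normN N h)\<^sup>2 \<le>
     (\<Sum>k\<in>{1..N-1}. (- delta2 h k) * h k + ((g k (x k) - g k (y k)) * h k) / (real N)\<^sup>2)"
    by (rule Qgen[OF h N _ m]) (use mono in \<open>auto simp: h_def\<close>)
  also have "\<dots> = (\<Sum>k\<in>{1..N-1}. (- r k) * h k)"
    by (intro sum.cong) (auto simp: r_def h_def Op_def delta2_diff field_simps)
  also have "\<dots> \<le> L2_set (\<lambda>k. - r k) {1..N-1} * L2_set h {1..N-1}" by (rule CS_L2)
  also have "\<dots> = normN N r * normN N h" by (simp add: normN_L2 L2_set_def)
  finally have *: "((1 + m) / (real N)\<^sup>2 * normN N h) * normN N h \<le> normN N r * normN N h"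
    by (simp add: power2_eq_square algebra_simps)
  have "(1 + m) / (real N)\<^sup>2 * normN N h \<le> normN N r"
  proof (cases "normN N h = 0")
    case True
    then show ?thesis by simp
  next
    case False
    then have "0 < normN N h" using normN_nonneg[of N h] by linarith
    then show ?thesis using mult_right_le_imp_le[OF *] by simp
  qed
  then show ?thesis by (simp add: h_def r_def)
qed

lemma mvt_mono:
  fixes g g' :: "real \<Rightarrow> real"
  assumes d: "\<forall>s. (g has_real_derivative g' s) (at s) \<and> m \<le> g' s"
  shows "m * (a - b)\<^sup>2 \<le> (g a - g b) * (a - b)"
proof -
  define \<phi> where "\<phi> s = g s - m * s" for s
  have dd: "\<exists>y. (\<phi> has_real_derivative y) (at s) \<and> 0 \<le> y" for s
    using d unfolding \<phi>_def
    by (intro exI[of _ "g' s - m"]) (auto intro!: derivative_eq_intros)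
  have mono: "\<phi> u \<le> \<phi> v" if "u \<le> v" for u v
    using DERIV_nonneg_imp_nondecreasing[OF that] dd by blast
  show ?thesis
  proof (cases "b \<le> a")
    case True
    then have "0 \<le> (\<phi> a - \<phi> b) * (a - b)" using mono[OF True] by simp
    then show ?thesis by (simp add: \<phi>_def power2_eq_square algebra_simps)
  next
    case False
    then have "0 \<le> (\<phi> b - \<phi> a) * (b - a)" using mono[of a b] by simp
    then show ?thesis by (simp add: \<phi>_def power2_eq_square algebra_simps)
  qed
qed

lemma normN_tri: "normN N (\<lambda>k. a k + b k) \<le> normN N a + normN N b"
  unfolding normN_L2 by (rule L2_set_triangle_ineq)

lemma normN_swap: "normN N (\<lambda>k. a k - b k) = normN N (\<lambda>k. b k - a k)"
  unfolding normN_def by (simp add: power2_commute)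

lemma normN_zero_coord: "x \<in> EN N \<Longrightarrow> normN N x = 0 \<Longrightarrow> x = (\<lambda>k. 0)"
  using coord_le[of x N] by (auto simp: fun_eq_iff)

lemma compact_box: "compact (PiE UNIV (T :: nat \<Rightarrow> real set))" if "\<And>i. compact (T i)"
proof -
  have "compactin (product_topology (\<lambda>i. euclidean) UNIV) (PiE UNIV T)"
    using that by (simp add: compactin_PiE)
  then show ?thesis by (simp add: euclidean_product_topology)
qed

lemma SURJ:
  assumes N: "1 \<le> N" and m: "m > -1"
    and der: "\<forall>k\<in>{1..N-1}. \<forall>s. (g k has_real_derivative g' k s) (at s) \<and> m \<le> g' k s"
    and w: "w \<in> EN N"
  shows "\<exists>x\<in>EN N. Op N g x = w"
proof -
  define I where "I = {1..N-1}"
  define c0 where "c0 = (1 + m) / (real N)\<^sup>2"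
  have c0: "c0 > 0" using m N by (simp add: c0_def)
  define \<Phi> where "\<Phi> x = (\<Sum>k\<in>I. (delta2 x k - g k (x k) / (real N)\<^sup>2 - w k)\<^sup>2)" for x
  have Phi_norm: "\<Phi> x = (normN N (\<lambda>k. Op N g x k - w k))\<^sup>2" for x
    unfolding \<Phi>_def normN_sq I_def by (intro sum.cong) (auto simp: Op_def)
  have mono: "\<forall>k\<in>I. (g k (x k) - g k (y k)) * (x k - y k) \<ge> m * (x k - y k)\<^sup>2" for x y
    using der mvt_mono[of "g _" "g' _" m] unfolding I_def by blast
  define z :: "nat \<Rightarrow> real" where "z = (\<lambda>k. 0)"
  have zS: "z \<in> EN N" by (simp add: z_def EN_zero)
  define b where "b = normN N (\<lambda>k. Op N g z k - w k)"
  have b0: "b \<ge> 0" by (simp add: b_def)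
  define R where "R = (2 * b + 1) / c0"
  have R0: "R \<ge> 0" using b0 c0 by (simp add: R_def)
  have big: "\<Phi> x > \<Phi> z" if x: "x \<in> EN N" and xR: "normN N x \<ge> R" for x
  proof -
    have "c0 * normN N x \<le> normN N (\<lambda>k. Op N g x k - Op N g z k)"
      using SM[OF x zS N m mono[unfolded I_def]] by (simp add: c0_def z_def)
    also have "\<dots> \<le> normN N (\<lambda>k. Op N g x k - w k) + normN N (\<lambda>k. w k - Op N g z k)"
      using normN_tri[of N "\<lambda>k. Op N g x k - w k" "\<lambda>k. w k - Op N g z k"] by simp
    also have "\<dots> = normN N (\<lambda>k. Op N g x k - w k) + b"
      using normN_swap[of N w "Op N g z"] by (simp add: b_def)
    finally have "c0 * normN N x - b \<le> normN N (\<lambda>k. Op N g x k - w k)" by simp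
    moreover have "c0 * normN N x \<ge> 2 * b + 1"
      using mult_left_mono[OF xR, of c0] c0 by (simp add: R_def)
    ultimately have "b < normN N (\<lambda>k. Op N g x k - w k)" by linarith
    then have "b\<^sup>2 < (normN N (\<lambda>k. Op N g x k - w k))\<^sup>2"
      using b0 by (simp add: power_strict_mono)
    then show ?thesis by (simp add: Phi_norm b_def)
  qed
  define T where "T i = (if i \<in> I then {-R..R} else {0::real})" for i
  define K where "K = PiE UNIV T"
  have cK: "compact K" unfolding K_def by (rule compact_box) (simp add: T_def)
  have zK: "z \<in> K" using R0 by (simp add: K_def T_def z_def PiE_iff)
  have KS: "K \<subseteq> EN N"
  proof (auto simp: K_def T_def EN_def I_def PiE_iff)
    fix x :: "nat \<Rightarrow> real" and k
    assume a: "\<forall>i. x i \<in> (if Suc 0 \<le> i \<and> i \<le> N - Suc 0 then {- R..R} else {0})"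
    show "x 0 = 0" using a[rule_format, of 0] by simp
    assume "N \<le> k"
    then show "x k = 0" using a[rule_format, of k] N by (auto split: if_splits)
  qed
  have coordc: "continuous_on K (\<lambda>x. x j)" for j
    by (rule continuous_on_subset[OF continuous_on_product_coordinates]) simp
  have gc: "continuous_on UNIV (g k)" if "k \<in> I" for k
    using der that unfolding I_def
    by (metis DERIV_isCont continuous_at_imp_continuous_on)
  have "continuous_on K \<Phi>"
    unfolding \<Phi>_def delta2_def
    by (intro continuous_intros coordc continuous_on_compose2[OF gc coordc]) (use N in auto)
  then obtain x0 where x0K: "x0 \<in> K" and x0min: "\<forall>y\<in>K. \<Phi> x0 \<le> \<Phi> y"
    using continuous_attains_inf[OF cK] zK by blast
  have x0S: "x0 \<in> EN N" using KS x0K by blast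
  have glob: "\<Phi> x0 \<le> \<Phi> y" if y: "y \<in> EN N" for y
  proof (cases "y \<in> K")
    case True then show ?thesis using x0min by blast
  next
    case False
    then obtain i where "y i \<notin> T i" by (auto simp: K_def PiE_iff)
    moreover have "i \<in> I"
    proof (rule ccontr)
      assume "i \<notin> I"
      then have "y i = 0" using EN_out[OF y] by (simp add: I_def)
      then show False using calculation \<open>i \<notin> I\<close> by (simp add: T_def)
    qed
    ultimately have "\<bar>y i\<bar> > R" by (auto simp: T_def)
    then have "normN N y \<ge> R" using coord_le[OF y, of i] by linarith
    then have "\<Phi> y > \<Phi> z" by (rule big[OF y])
    then show ?thesis using x0min zK by fastforce
  qed
  define r where "r = (\<lambda>k. Op N g x0 k - w k)"
  have rS: "r \<in> EN N" unfolding r_def by (rule EN_diff[OF Op_EN[OF N] w])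
  define \<psi> where "\<psi> s = \<Phi> (\<lambda>k. x0 k + s * r k)" for s
  have psi_eq: "\<psi> s = (\<Sum>k\<in>I. (delta2 x0 k + s * delta2 r k - g k (x0 k + s * r k) / (real N)\<^sup>2 - w k)\<^sup>2)" for s
    unfolding \<psi>_def \<Phi>_def by (simp add: delta2_add delta2_scale)
  define D where "D = (\<Sum>k\<in>I. 2 * (delta2 x0 k - g k (x0 k) / (real N)\<^sup>2 - w k) *
      (delta2 r k - g' k (x0 k) * r k / (real N)\<^sup>2))"
  have dk: "((\<lambda>s. (delta2 x0 k + s * delta2 r k - g k (x0 k + s * r k) / (real N)\<^sup>2 - w k)\<^sup>2)
     has_real_derivative 2 * (delta2 x0 k - g k (x0 k) / (real N)\<^sup>2 - w k) *
      (delta2 r k - g' k (x0 k) * r k / (real N)\<^sup>2)) (at 0)" if k: "k \<in> I" for k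
  proof -
    have g1: "((\<lambda>s. g k (x0 k + s * r k)) has_real_derivative r k * g' k (x0 k + 0 * r k)) (at 0)"
      by (rule DERIV_chain3) (use der k in \<open>auto simp: I_def intro!: derivative_eq_intros\<close>)
    have g2: "((\<lambda>s. g k (x0 k + s * r k) / (real N)\<^sup>2) has_real_derivative r k * g' k (x0 k) / (real N)\<^sup>2) (at 0)"
      using DERIV_cdivide[OF g1, of "(real N)\<^sup>2"] by simp
    have l: "((\<lambda>s. delta2 x0 k + s * delta2 r k) has_real_derivative delta2 r k) (at 0)"
      by (auto intro!: derivative_eq_intros)
    have e: "((\<lambda>s. delta2 x0 k + s * delta2 r k - g k (x0 k + s * r k) / (real N)\<^sup>2 - w k)
        has_real_derivative (delta2 r k - r k * g' k (x0 k) / (real N)\<^sup>2 - 0)) (at 0)"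
      by (intro DERIV_diff l g2 DERIV_const)
    show ?thesis
      by (rule DERIV_cong[OF DERIV_power[OF e, of 2]]) (simp add: mult_ac)
  qed
  have dpsi: "(\<psi> has_real_derivative D) (at 0)"
    unfolding psi_eq[abs_def] D_def by (rule DERIV_sum) (use dk in auto)
  have "D = 0"
  proof (rule DERIV_local_min[OF dpsi, of 1])
    show "\<forall>y. \<bar>0 - y\<bar> < 1 \<longrightarrow> \<psi> 0 \<le> \<psi> y"
    proof (intro allI impI)
      fix y :: real
      have "(\<lambda>k. x0 k + y * r k) \<in> EN N" by (rule EN_add[OF x0S EN_scale[OF rS]])
      then show "\<psi> 0 \<le> \<psi> y" using glob by (simp add: \<psi>_def)
    qed
  qed simp
  have "c0 * (normN N r)\<^sup>2 \<le> (\<Sum>k\<in>{1..N-1}. (- delta2 r k) * r k + (g' k (x0 k) * (r k)\<^sup>2) / (real N)\<^sup>2)"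
    unfolding c0_def by (rule Qgen[OF rS N _ m]) (use der in \<open>auto intro!: mult_right_mono\<close>)
  also have "\<dots> = - D / 2"
  proof -
    have "D = (\<Sum>k\<in>I. (-2) * ((- delta2 r k) * r k + (g' k (x0 k) * (r k)\<^sup>2) / (real N)\<^sup>2))"
      unfolding D_def
    proof (intro sum.cong refl)
      fix k assume "k \<in> I"
      then have e: "delta2 x0 k - g k (x0 k) / (real N)\<^sup>2 - w k = r k"
        by (simp add: r_def Op_def I_def)
      show "2 * (delta2 x0 k - g k (x0 k) / (real N)\<^sup>2 - w k) * (delta2 r k - g' k (x0 k) * r k / (real N)\<^sup>2)
        = (-2) * ((- delta2 r k) * r k + (g' k (x0 k) * (r k)\<^sup>2) / (real N)\<^sup>2)"
        unfolding e by (simp add: power2_eq_square algebra_simps)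
    qed
    also have "\<dots> = (-2) * (\<Sum>k\<in>I. (- delta2 r k) * r k + (g' k (x0 k) * (r k)\<^sup>2) / (real N)\<^sup>2)"
      by (simp add: sum_distrib_left)
    finally show ?thesis by (simp add: I_def)
  qed
  finally have "c0 * (normN N r)\<^sup>2 \<le> 0" using \<open>D = 0\<close> by simp
  then have "(normN N r)\<^sup>2 \<le> 0" using c0 by (simp add: mult_le_0_iff)
  then have "normN N r = 0" by simp
  then have "r = (\<lambda>k. 0)" by (rule normN_zero_coord[OF rS])
  then have "Op N g x0 = w" by (simp add: r_def fun_eq_iff)
  then show ?thesis using x0S by blast
qed

lemma fin_delta:
  fixes P :: "'k \<Rightarrow> real \<Rightarrow> bool"
  assumes "finite K" and "\<forall>k\<in>K. \<exists>d>0. \<forall>u. \<bar>u\<bar> < d \<longrightarrow> P k u"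
  shows "\<exists>d>0. \<forall>k\<in>K. \<forall>u. \<bar>u\<bar> < d \<longrightarrow> P k u"
  using assms
proof (induction K rule: finite_induct)
  case empty
  show ?case by (rule exI[of _ "1::real"]) simp
next
  case (insert a K)
  then obtain d1 where d1: "d1 > 0" "\<forall>k\<in>K. \<forall>u. \<bar>u\<bar> < d1 \<longrightarrow> P k u" by auto
  obtain d2 where d2: "d2 > 0" "\<forall>u. \<bar>u\<bar> < d2 \<longrightarrow> P a u" using insert.prems by auto
  show ?case using d1 d2 by (intro exI[of _ "min d1 d2"]) auto
qed

lemma deriv_eps:
  assumes "(g has_real_derivative D) (at a)" and "e > 0"
  shows "\<exists>d>0. \<forall>u. \<bar>u\<bar> < d \<longrightarrow> \<bar>g (a + u) - g a - D * u\<bar> \<le> e * \<bar>u\<bar>"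
proof -
  have "(g has_derivative (*) D) (at a)"
    using assms(1) by (simp add: has_field_derivative_def)
  then obtain d where d: "d > 0" "\<forall>y. norm (y - a) < d \<longrightarrow> norm (g y - g a - D * (y - a)) \<le> e * norm (y - a)"
    using assms(2) unfolding has_derivative_at_alt by blast
  show ?thesis
  proof (intro exI[of _ d] conjI allI impI)
    fix u :: real assume "\<bar>u\<bar> < d"
    then show "\<bar>g (a + u) - g a - D * u\<bar> \<le> e * \<bar>u\<bar>" using d(2)[rule_format, of "a + u"] by simp
  qed (rule d(1))
qed

lemma cont_eps:
  assumes "continuous_on UNIV (g :: real \<Rightarrow> real)" and "e > 0"
  shows "\<exists>d>0. \<forall>u. \<bar>u\<bar> < d \<longrightarrow> \<bar>g (a + u) - g a\<bar> \<le> e"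
proof -
  obtain d where d: "d > 0" "\<forall>x'\<in>UNIV. dist x' a < d \<longrightarrow> dist (g x') (g a) < e"
    using assms unfolding continuous_on_iff by blast
  show ?thesis
  proof (intro exI[of _ d] conjI allI impI)
    fix u :: real assume "\<bar>u\<bar> < d"
    then show "\<bar>g (a + u) - g a\<bar> \<le> e" using d(2)[rule_format, of "a + u"] by (simp add: dist_real_def)
  qed (rule d(1))
qed

lemma lin_Op: "1 \<le> N \<Longrightarrow> lin_on (EN N) (Op N (\<lambda>k s. a k * s))"
  unfolding lin_on_def
  by (intro conjI ballI allI Op_EN)
     (auto simp: Op_def fun_eq_iff delta2_add delta2_scale algebra_simps add_divide_distrib)

lemma sum_card_bound:
  assumes "\<forall>k\<in>{1..N-1}. \<bar>\<rho> k\<bar> \<le> B" and B0: "B \<ge> 0"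
  shows "normN N \<rho> \<le> real N * B"
proof -
  have "normN N \<rho> \<le> (\<Sum>k\<in>{1..N-1}. \<bar>\<rho> k\<bar>)" by (rule normN_le_sum)
  also have "\<dots> \<le> (\<Sum>k\<in>{1..N-1}. B)" by (rule sum_mono) (use assms in auto)
  also have "\<dots> = real (N - 1) * B" by simp
  also have "\<dots> \<le> real N * B" using B0 by (auto intro: mult_right_mono)
  finally show ?thesis .
qed

lemma FD:
  assumes N: "1 \<le> N"
    and der: "\<forall>k\<in>{1..N-1}. \<forall>s. (g k has_real_derivative g' k s) (at s)"
    and x: "x \<in> EN N"
  shows "has_deriv_on (normEN N) (normN N) (EN N) (Op N g) (Op N (\<lambda>k s. g' k (x k) * s)) x"
  unfolding has_deriv_on_def
proof (intro conjI lin_Op[OF N] allI impI)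
  fix e :: real assume e: "e > 0"
  define e1 where "e1 = e / real N ^ 3"
  have e1: "e1 > 0" using e N by (simp add: e1_def)
  have "\<forall>k\<in>{1..N-1}. \<exists>d>0. \<forall>u. \<bar>u\<bar> < d \<longrightarrow> \<bar>g k (x k + u) - g k (x k) - g' k (x k) * u\<bar> \<le> e1 * \<bar>u\<bar>"
    using der deriv_eps e1 by blast
  then obtain dd where dd: "dd > 0"
    "\<forall>k\<in>{1..N-1}. \<forall>u. \<bar>u\<bar> < dd \<longrightarrow> \<bar>g k (x k + u) - g k (x k) - g' k (x k) * u\<bar> \<le> e1 * \<bar>u\<bar>"
    using fin_delta[of "{1..N-1}" "\<lambda>k u. \<bar>g k (x k + u) - g k (x k) - g' k (x k) * u\<bar> \<le> e1 * \<bar>u\<bar>"] by auto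
  have NN: "(real N)\<^sup>2 \<ge> 1" using N by simp
  show "\<exists>d>0. \<forall>h\<in>EN N. normEN N h < d \<longrightarrow>
        normN N (\<lambda>k. Op N g (\<lambda>j. x j + h j) k - Op N g x k - Op N (\<lambda>k s. g' k (x k) * s) h k)
        \<le> e * normEN N h"
  proof (intro exI[of _ "dd / (real N)\<^sup>2"] conjI ballI impI)
    show "dd / (real N)\<^sup>2 > 0" using dd N by simp
    fix h assume h: "h \<in> EN N" and hd: "normEN N h < dd / (real N)\<^sup>2"
    have hN: "normN N h < dd"
      using E2[OF h N] hd N by (simp add: pos_less_divide_eq mult.commute)
    have "\<forall>k\<in>{1..N-1}. \<bar>Op N g (\<lambda>j. x j + h j) k - Op N g x k - Op N (\<lambda>k s. g' k (x k) * s) h k\<bar> \<le> e1 * normN N h"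
    proof
      fix k assume k: "k \<in> {1..N-1}"
      have hk: "\<bar>h k\<bar> \<le> normN N h" by (rule coord_le[OF h])
      have "\<bar>Op N g (\<lambda>j. x j + h j) k - Op N g x k - Op N (\<lambda>k s. g' k (x k) * s) h k\<bar>
          = \<bar>g k (x k + h k) - g k (x k) - g' k (x k) * h k\<bar> / (real N)\<^sup>2"
      proof -
        have "Op N g (\<lambda>j. x j + h j) k - Op N g x k - Op N (\<lambda>k s. g' k (x k) * s) h k
           = - (g k (x k + h k) - g k (x k) - g' k (x k) * h k) / (real N)\<^sup>2"
          using k N by (simp add: Op_def delta2_add field_simps)
        then show ?thesis by (simp only: abs_divide abs_minus_cancel) simp
      qed
      also have "\<dots> \<le> \<bar>g k (x k + h k) - g k (x k) - g' k (x k) * h k\<bar>"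
        using NN by (simp add: divide_le_eq_1 divide_le_eq mult_le_cancel_left1)
      also have "\<dots> \<le> e1 * \<bar>h k\<bar>" using dd(2) k hk hN by auto
      also have "\<dots> \<le> e1 * normN N h" using hk e1 by simp
      finally show "\<bar>Op N g (\<lambda>j. x j + h j) k - Op N g x k - Op N (\<lambda>k s. g' k (x k) * s) h k\<bar> \<le> e1 * normN N h" .
    qed
    then have "normN N (\<lambda>k. Op N g (\<lambda>j. x j + h j) k - Op N g x k - Op N (\<lambda>k s. g' k (x k) * s) h k)
        \<le> real N * (e1 * normN N h)" by (rule sum_card_bound) (use e1 in auto)
    also have "\<dots> \<le> real N * (e1 * ((real N)\<^sup>2 * normEN N h))"
      using E2[OF h N] e1 by (intro mult_left_mono) auto
    also have "\<dots> = e * normEN N h" using N by (simp add: e1_def power2_eq_square power3_eq_cube)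
    finally show "normN N (\<lambda>k. Op N g (\<lambda>j. x j + h j) k - Op N g x k - Op N (\<lambda>k s. g' k (x k) * s) h k)
        \<le> e * normEN N h" .
  qed
qed

lemma opnorm_le:
  assumes "\<And>h. h \<in> S \<Longrightarrow> n1 h \<le> 1 \<Longrightarrow> n2 (L h) \<le> e" and "z \<in> S" and "n1 z \<le> 1"
  shows "opnorm n1 n2 S L \<le> e"
  unfolding opnorm_def using assms by (intro cSup_least) auto

lemma normEN_zero [simp]: "normEN N (\<lambda>k. 0) = 0"
  by (simp add: normEN_def delta2_def)
lemma normN_zero [simp]: "normN N (\<lambda>k. 0) = 0"
  by (simp add: normN_def)

lemma CD:
  assumes N: "1 \<le> N"
    and gc: "\<forall>k\<in>{1..N-1}. continuous_on UNIV (g' k)"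
    and x: "x \<in> EN N" and e: "e > 0"
  shows "\<exists>d>0. \<forall>y\<in>EN N. normEN N (\<lambda>k. y k - x k) < d \<longrightarrow>
        opnorm (normEN N) (normN N) (EN N)
          (\<lambda>h k. Op N (\<lambda>k s. g' k (y k) * s) h k - Op N (\<lambda>k s. g' k (x k) * s) h k) \<le> e"
proof -
  define e1 where "e1 = e / real N ^ 3"
  have e1: "e1 > 0" using e N by (simp add: e1_def)
  have "\<forall>k\<in>{1..N-1}. \<exists>d>0. \<forall>u. \<bar>u\<bar> < d \<longrightarrow> \<bar>g' k (x k + u) - g' k (x k)\<bar> \<le> e1"
    using gc cont_eps e1 by blast
  then obtain dd where dd: "dd > 0"
    "\<forall>k\<in>{1..N-1}. \<forall>u. \<bar>u\<bar> < dd \<longrightarrow> \<bar>g' k (x k + u) - g' k (x k)\<bar> \<le> e1"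
    using fin_delta[of "{1..N-1}" "\<lambda>k u. \<bar>g' k (x k + u) - g' k (x k)\<bar> \<le> e1"] by auto
  have NN: "(real N)\<^sup>2 \<ge> 1" using N by simp
  show ?thesis
  proof (intro exI[of _ "dd / (real N)\<^sup>2"] conjI ballI impI)
    show "dd / (real N)\<^sup>2 > 0" using dd N by simp
    fix y assume y: "y \<in> EN N" and yd: "normEN N (\<lambda>k. y k - x k) < dd / (real N)\<^sup>2"
    have yx: "(\<lambda>k. y k - x k) \<in> EN N" by (rule EN_diff[OF y x])
    have yN: "normN N (\<lambda>k. y k - x k) < dd"
      using E2[OF yx N] yd N by (simp add: pos_less_divide_eq mult.commute)
    show "opnorm (normEN N) (normN N) (EN N)
          (\<lambda>h k. Op N (\<lambda>k s. g' k (y k) * s) h k - Op N (\<lambda>k s. g' k (x k) * s) h k) \<le> e"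
    proof (rule opnorm_le[OF _ EN_zero])
      fix h assume h: "h \<in> EN N" and h1: "normEN N h \<le> 1"
      have "\<forall>k\<in>{1..N-1}. \<bar>Op N (\<lambda>k s. g' k (y k) * s) h k - Op N (\<lambda>k s. g' k (x k) * s) h k\<bar> \<le> e1 * normN N h"
      proof
        fix k assume k: "k \<in> {1..N-1}"
        have hk: "\<bar>h k\<bar> \<le> normN N h" by (rule coord_le[OF h])
        have "\<bar>y k - x k\<bar> < dd" using coord_le[OF yx, of k] yN by simp
        then have gk: "\<bar>g' k (y k) - g' k (x k)\<bar> \<le> e1" using dd(2) k by force
        have "Op N (\<lambda>k s. g' k (y k) * s) h k - Op N (\<lambda>k s. g' k (x k) * s) h k
            = - ((g' k (y k) - g' k (x k)) * h k) / (real N)\<^sup>2"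
          using k N by (simp add: Op_def field_simps)
        then have "\<bar>Op N (\<lambda>k s. g' k (y k) * s) h k - Op N (\<lambda>k s. g' k (x k) * s) h k\<bar>
            = \<bar>g' k (y k) - g' k (x k)\<bar> * \<bar>h k\<bar> / (real N)\<^sup>2"
          by (simp only: abs_divide abs_minus_cancel abs_mult) simp
        also have "\<dots> \<le> \<bar>g' k (y k) - g' k (x k)\<bar> * \<bar>h k\<bar>"
          using divide_left_mono[of 1 "(real N)\<^sup>2" "\<bar>g' k (y k) - g' k (x k)\<bar> * \<bar>h k\<bar>"] NN N by simp
        also have "\<dots> \<le> e1 * normN N h" using gk hk by (intro mult_mono) auto
        finally show "\<bar>Op N (\<lambda>k s. g' k (y k) * s) h k - Op N (\<lambda>k s. g' k (x k) * s) h k\<bar> \<le> e1 * normN N h" .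
      qed
      then have "normN N (\<lambda>k. Op N (\<lambda>k s. g' k (y k) * s) h k - Op N (\<lambda>k s. g' k (x k) * s) h k)
          \<le> real N * (e1 * normN N h)" by (rule sum_card_bound) (use e1 in auto)
      also have "\<dots> \<le> real N * (e1 * ((real N)\<^sup>2 * 1))"
        using E2[OF h N] e1 h1 N by (intro mult_left_mono) (auto intro: order_trans)
      also have "\<dots> = e" using N by (simp add: e1_def power2_eq_square power3_eq_cube)
      finally show "normN N (\<lambda>k. Op N (\<lambda>k s. g' k (y k) * s) h k - Op N (\<lambda>k s. g' k (x k) * s) h k) \<le> e" .
    qed simp
  qed
qed

lemma C1_Op:
  assumes N: "1 \<le> N"
    and der: "\<forall>k\<in>{1..N-1}. \<forall>s. (g k has_real_derivative g' k s) (at s)"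
    and gc: "\<forall>k\<in>{1..N-1}. continuous_on UNIV (g' k)"
  shows "C1_on (normEN N) (normN N) (EN N) (Op N g)"
  unfolding C1_on_def
  by (rule exI[of _ "\<lambda>x. Op N (\<lambda>k s. g' k (x k) * s)"])
     (use FD[OF N der] CD[OF N gc] in blast)

lemma BIJ_Op:
  assumes N: "1 \<le> N" and m: "m > -1"
    and der: "\<forall>k\<in>{1..N-1}. \<forall>s. (g k has_real_derivative g' k s) (at s) \<and> m \<le> g' k s"
  shows "bij_betw (Op N g) (EN N) (EN N)"
    and "\<And>x y. x \<in> EN N \<Longrightarrow> y \<in> EN N \<Longrightarrow>
          (1 + m) / (real N)\<^sup>2 * normN N (\<lambda>k. x k - y k) \<le> normN N (\<lambda>k. Op N g x k - Op N g y k)"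
proof -
  have mono: "\<forall>k\<in>{1..N-1}. (g k (x k) - g k (y k)) * (x k - y k) \<ge> m * (x k - y k)\<^sup>2" for x y
    using der mvt_mono[of "g _" "g' _" m] by blast
  show sm: "(1 + m) / (real N)\<^sup>2 * normN N (\<lambda>k. x k - y k) \<le> normN N (\<lambda>k. Op N g x k - Op N g y k)"
    if "x \<in> EN N" "y \<in> EN N" for x y
    by (rule SM[OF that N m mono])
  have c0: "(1 + m) / (real N)\<^sup>2 > 0" using m N by simp
  have inj: "inj_on (Op N g) (EN N)"
  proof (rule inj_onI)
    fix x y assume x: "x \<in> EN N" and y: "y \<in> EN N" and eq: "Op N g x = Op N g y"
    have "(1 + m) / (real N)\<^sup>2 * normN N (\<lambda>k. x k - y k) \<le> 0" using sm[OF x y] eq by simp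
    then have "normN N (\<lambda>k. x k - y k) \<le> 0" by (metis c0 mult_le_0_iff not_less)
    then have "normN N (\<lambda>k. x k - y k) = 0" using normN_nonneg[of N "\<lambda>k. x k - y k"] by linarith
    then have "(\<lambda>k. x k - y k) = (\<lambda>k. 0)" by (rule normN_zero_coord[OF EN_diff[OF x y]])
    then show "x = y" by (simp add: fun_eq_iff)
  qed
  have "Op N g ` EN N = EN N"
  proof
    show "Op N g ` EN N \<subseteq> EN N" using Op_EN[OF N] by blast
    show "EN N \<subseteq> Op N g ` EN N" using SURJ[OF N m der] by (metis image_eqI subsetI)
  qed
  then show "bij_betw (Op N g) (EN N) (EN N)" using inj by (simp add: bij_betw_def)
qed

lemma Op_lin_zero: "Op N (\<lambda>k s. a k * s) (\<lambda>k. 0) = (\<lambda>k. 0)"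
  by (simp add: Op_def delta2_def fun_eq_iff)

lemma lin_diff: "lin_on S L \<Longrightarrow> p \<in> S \<Longrightarrow> q \<in> S \<Longrightarrow> (\<forall>x\<in>S. \<forall>c. (\<lambda>k. c * x k) \<in> S) \<Longrightarrow>
   L (\<lambda>k. p k - q k) = (\<lambda>k. L p k - L q k)"
proof -
  assume L: "lin_on S L" and p: "p \<in> S" and q: "q \<in> S" and sc: "\<forall>x\<in>S. \<forall>c. (\<lambda>k. c * x k) \<in> S"
  have q': "(\<lambda>k. (-1) * q k) \<in> S" using sc q by blast
  have L2: "\<forall>h\<in>S. \<forall>g\<in>S. L (\<lambda>k. h k + g k) = (\<lambda>k. L h k + L g k)" and
    L3: "\<forall>h\<in>S. \<forall>c. L (\<lambda>k. c * h k) = (\<lambda>k. c * L h k)" using L unfolding lin_on_def by auto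
  have "L (\<lambda>k. p k + (\<lambda>k. (-1) * q k) k) = (\<lambda>k. L p k + L (\<lambda>k. (-1) * q k) k)"
    using L2[rule_format, OF p q'] .
  moreover have "L (\<lambda>k. (-1) * q k) = (\<lambda>k. (-1) * L q k)" using L3[rule_format, OF q] .
  ultimately show ?thesis by simp
qed

lemma LIN:
  assumes N: "1 \<le> N" and m: "m > -1" and a: "\<forall>k\<in>{1..N-1}. m \<le> a k"
  defines "A \<equiv> Op N (\<lambda>k s. a k * s)"
  defines "B \<equiv> inv_into (EN N) A"
  shows "lin_on (EN N) A" "lin_on (EN N) B"
    "\<And>v. v \<in> EN N \<Longrightarrow> B v \<in> EN N \<and> A (B v) = v"
    "\<And>h. h \<in> EN N \<Longrightarrow> B (A h) = h"
    "\<And>h. h \<in> EN N \<Longrightarrow> (1 + m) / (real N)\<^sup>2 * normN N h \<le> normN N (A h)"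
    "\<And>v. v \<in> EN N \<Longrightarrow> normEN N (B v) \<le> 4 * real N / ((1 + m) / (real N)\<^sup>2) * normN N v"
proof -
  define c0 where "c0 = (1 + m) / (real N)\<^sup>2"
  have c0: "c0 > 0" using m N by (simp add: c0_def)
  have der: "\<forall>k\<in>{1..N-1}. \<forall>s. ((\<lambda>s. a k * s) has_real_derivative a k) (at s) \<and> m \<le> a k"
    using a by (auto intro!: derivative_eq_intros)
  note bij = BIJ_Op[OF N m der, folded A_def]
  show linA: "lin_on (EN N) A" unfolding A_def by (rule lin_Op[OF N])
  show AB: "B v \<in> EN N \<and> A (B v) = v" if "v \<in> EN N" for v
    using bij(1) that unfolding B_def
    by (metis bij_betw_def f_inv_into_f inv_into_into)
  show BA: "B (A h) = h" if "h \<in> EN N" for h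
    using bij(1) that unfolding B_def by (simp add: bij_betw_def)
  show low: "(1 + m) / (real N)\<^sup>2 * normN N h \<le> normN N (A h)" if h: "h \<in> EN N" for h
    using bij(2)[OF h EN_zero] by (simp add: A_def Op_lin_zero)
  show "lin_on (EN N) B"
    unfolding lin_on_def
  proof (intro conjI ballI allI)
    fix h assume h: "h \<in> EN N"
    show "B h \<in> EN N" using AB[OF h] by simp
    fix c :: real
    have "A (\<lambda>k. c * B h k) = (\<lambda>k. c * A (B h) k)" using linA AB[OF h] unfolding lin_on_def by blast
    then have "A (\<lambda>k. c * B h k) = (\<lambda>k. c * h k)" using AB[OF h] by simp
    then show "B (\<lambda>k. c * h k) = (\<lambda>k. c * B h k)"
      using BA[OF EN_scale[of "B h" N c]] AB[OF h] by simp
  next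
    fix h g assume h: "h \<in> EN N" and g: "g \<in> EN N"
    have "A (\<lambda>k. B h k + B g k) = (\<lambda>k. A (B h) k + A (B g) k)"
      using linA AB[OF h] AB[OF g] unfolding lin_on_def by blast
    then have "A (\<lambda>k. B h k + B g k) = (\<lambda>k. h k + g k)" using AB[OF h] AB[OF g] by simp
    then show "B (\<lambda>k. h k + g k) = (\<lambda>k. B h k + B g k)"
      using BA[OF EN_add[of "B h" N "B g"]] AB[OF h] AB[OF g] by simp
  qed
  show "normEN N (B v) \<le> 4 * real N / ((1 + m) / (real N)\<^sup>2) * normN N v" if v: "v \<in> EN N" for v
  proof -
    have "c0 * normN N (B v) \<le> normN N v" using low[of "B v"] AB[OF v] by (simp add: c0_def)
    then have "normN N (B v) \<le> normN N v / c0" using c0 by (simp add: field_simps)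
    then have "4 * real N * normN N (B v) \<le> 4 * real N * (normN N v / c0)" by (intro mult_left_mono) auto
    then have "normEN N (B v) \<le> 4 * real N * (normN N v / c0)" using E1[of "B v" N] AB[OF v] by linarith
    also have "\<dots> = 4 * real N / c0 * normN N v" by simp
    finally show ?thesis by (simp add: c0_def)
  qed
qed

lemma normEN_neg: "normEN N (\<lambda>k. - v k) = normEN N v"
  by (simp add: normEN_def delta2_def algebra_simps power2_commute)

lemma normEN_swap: "normEN N (\<lambda>k. a k - b k) = normEN N (\<lambda>k. b k - a k)"
  by (simp add: normEN_def delta2_def algebra_simps power2_commute)

lemma EN_scale_all: "\<forall>x\<in>EN N. \<forall>c. (\<lambda>k. c * x k) \<in> EN N"
  using EN_scale by blast

lemma INV_C1:
  assumes N: "1 \<le> N" and m: "m > -1"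
    and der: "\<forall>k\<in>{1..N-1}. \<forall>s. (g k has_real_derivative g' k s) (at s) \<and> m \<le> g' k s"
    and gc: "\<forall>k\<in>{1..N-1}. continuous_on UNIV (g' k)"
  shows "C1_on (normN N) (normEN N) (EN N) (inv_into (EN N) (Op N g))"
proof -
  define S where "S = EN N"
  define F where "F = Op N g"
  define H where "H = inv_into S F"
  define L where "L x = Op N (\<lambda>k s. g' k (x k) * s)" for x :: "nat \<Rightarrow> real"
  define M where "M w = inv_into S (L (H w))" for w
  define c0 where "c0 = (1 + m) / (real N)\<^sup>2"
  define C where "C = 4 * real N / c0"
  have c0: "c0 > 0" using m N by (simp add: c0_def)
  have C: "C > 0" using c0 N by (simp add: C_def)
  have der': "\<forall>k\<in>{1..N-1}. \<forall>s. (g k has_real_derivative g' k s) (at s)" using der by blast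
  note bij = BIJ_Op[OF N m der, folded F_def S_def c0_def]
  have HS: "H w \<in> S \<and> F (H w) = w" if "w \<in> S" for w
    using bij(1) that unfolding H_def by (metis bij_betw_def f_inv_into_f inv_into_into)
  have ax: "\<forall>k\<in>{1..N-1}. m \<le> g' k (x k)" for x using der by blast
  have linx: "lin_on S (L x)" for x using LIN(1)[OF N m ax[of x]] by (simp add: L_def S_def)
  have lowx: "c0 * normN N h \<le> normN N (L x h)" if "h \<in> S" for x h
    using LIN(5)[OF N m ax[of x]] that by (simp add: L_def S_def c0_def)
  have LM: "lin_on S (M w)" "\<And>v. v \<in> S \<Longrightarrow> M w v \<in> S \<and> L (H w) (M w v) = v"
     "\<And>h. h \<in> S \<Longrightarrow> M w (L (H w) h) = h"
     "\<And>v. v \<in> S \<Longrightarrow> normEN N (M w v) \<le> C * normN N v" for w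
    using LIN(2-4,6)[OF N m ax[of "H w"], folded L_def S_def c0_def, folded C_def] unfolding M_def by auto
  have F'_def: "\<forall>x\<in>S. has_deriv_on (normEN N) (normN N) S F (L x) x"
    using FD[OF N der'] unfolding S_def F_def L_def by blast
  have dist_H: "c0 * normN N (\<lambda>k. H w' k - H w k) \<le> normN N (\<lambda>k. w' k - w k)"
    if "w \<in> S" "w' \<in> S" for w w'
    using bij(2)[of "H w'" "H w"] HS[OF that(1)] HS[OF that(2)] by (simp add: S_def F_def)
  show ?thesis
    unfolding C1_on_def S_def[symmetric] F_def[symmetric] H_def[symmetric]
  proof (intro exI[of _ M] conjI ballI allI impI)
    fix w assume w: "w \<in> S"
    define x where "x = H w"
    have x: "x \<in> S" "F x = w" using HS[OF w] by (auto simp: x_def)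
    show "has_deriv_on (normN N) (normEN N) S H (M w) w"
      unfolding has_deriv_on_def
    proof (intro conjI LM allI impI)
      fix e :: real assume e: "e > 0"
      define e1 where "e1 = e * c0 / (C * 4 * real N)"
      have e1: "e1 > 0" using e c0 C N by (simp add: e1_def)
      obtain d1 where d1: "d1 > 0" "\<forall>u\<in>S. normEN N u < d1 \<longrightarrow>
          normN N (\<lambda>k. F (\<lambda>j. x j + u j) k - F x k - L x u k) \<le> e1 * normEN N u"
        using F'_def x(1) e1 unfolding has_deriv_on_def by blast
      show "\<exists>d>0. \<forall>h\<in>S. normN N h < d \<longrightarrow>
         normEN N (\<lambda>k. H (\<lambda>j. w j + h j) k - H w k - M w h k) \<le> e * normN N h"
      proof (intro exI[of _ "c0 * d1 / (4 * real N)"] conjI ballI impI)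
        show "c0 * d1 / (4 * real N) > 0" using c0 d1 N by simp
        fix h assume h: "h \<in> S" and hd: "normN N h < c0 * d1 / (4 * real N)"
        have wh: "(\<lambda>j. w j + h j) \<in> S" using w h by (simp add: S_def EN_add)
        define y where "y = H (\<lambda>j. w j + h j)"
        have y: "y \<in> S" "F y = (\<lambda>j. w j + h j)" using HS[OF wh] by (auto simp: y_def)
        define u where "u = (\<lambda>k. y k - x k)"
        have uS: "u \<in> S" using y x by (simp add: u_def S_def EN_diff)
        have xu: "(\<lambda>j. x j + u j) = y" by (simp add: u_def)
        have "c0 * normN N u \<le> normN N (\<lambda>k. (w k + h k) - w k)"
          using dist_H[OF w wh] by (simp add: u_def y_def x_def)
        then have nu: "c0 * normN N u \<le> normN N h" by simp
        have "normEN N u \<le> 4 * real N * normN N u" using E1 uS by (simp add: S_def)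
        also have "\<dots> \<le> 4 * real N * (normN N h / c0)" using nu c0 by (intro mult_left_mono) (auto simp: field_simps)
        finally have neu: "normEN N u \<le> 4 * real N * normN N h / c0" by simp
        have "4 * real N * normN N h / c0 < d1"
          using hd c0 N by (simp add: field_simps)
        then have "normEN N u < d1" using neu by linarith
        then have rho: "normN N (\<lambda>k. F y k - F x k - L x u k) \<le> e1 * normEN N u"
          using d1(2) uS xu by auto
        define \<rho> where "\<rho> = (\<lambda>k. h k - L x u k)"
        have rho_eq: "(\<lambda>k. F y k - F x k - L x u k) = \<rho>" using y x by (simp add: \<rho>_def)
        have LuS: "L x u \<in> S" using linx[of x] uS unfolding lin_on_def by blast
        have rS: "\<rho> \<in> S" using h LuS by (simp add: \<rho>_def S_def EN_diff)
        have "M w \<rho> = (\<lambda>k. M w h k - M w (L x u) k)"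
          unfolding \<rho>_def by (rule lin_diff[OF LM(1) h LuS]) (simp add: S_def EN_scale_all)
        also have "M w (L x u) = u" using LM(3)[OF uS, of w] by (simp add: x_def)
        finally have Mr: "M w \<rho> = (\<lambda>k. M w h k - u k)" .
        have "(\<lambda>k. H (\<lambda>j. w j + h j) k - H w k - M w h k) = (\<lambda>k. - M w \<rho> k)"
          using Mr by (simp add: fun_eq_iff y_def[symmetric] x_def[symmetric] u_def)
        then have "normEN N (\<lambda>k. H (\<lambda>j. w j + h j) k - H w k - M w h k) = normEN N (M w \<rho>)"
          by (simp add: normEN_neg)
        also have "\<dots> \<le> C * normN N \<rho>" by (rule LM(4)[OF rS])
        also have "\<dots> \<le> C * (e1 * normEN N u)" using rho rho_eq C by simp
        also have "\<dots> \<le> C * (e1 * (4 * real N * normN N h / c0))"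
          using neu C e1 by (intro mult_left_mono) auto
        also have "\<dots> = e * normN N h" using C c0 N by (simp add: e1_def field_simps)
        finally show "normEN N (\<lambda>k. H (\<lambda>j. w j + h j) k - H w k - M w h k) \<le> e * normN N h" .
      qed
    qed
  next
    fix w e assume w: "w \<in> S" and e: "(e::real) > 0"
    define x where "x = H w"
    have x: "x \<in> S" "F x = w" using HS[OF w] by (auto simp: x_def)
    define e1 where "e1 = e * c0 / (C * real N)"
    have e1: "e1 > 0" using e c0 C N by (simp add: e1_def)
    have "\<forall>k\<in>{1..N-1}. \<exists>d>0. \<forall>u. \<bar>u\<bar> < d \<longrightarrow> \<bar>g' k (x k + u) - g' k (x k)\<bar> \<le> e1"
      using gc cont_eps e1 by blast
    then obtain dd where dd: "dd > 0"
      "\<forall>k\<in>{1..N-1}. \<forall>u. \<bar>u\<bar> < dd \<longrightarrow> \<bar>g' k (x k + u) - g' k (x k)\<bar> \<le> e1"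
      using fin_delta[of "{1..N-1}" "\<lambda>k u. \<bar>g' k (x k + u) - g' k (x k)\<bar> \<le> e1"] by auto
    show "\<exists>d>0. \<forall>w'\<in>S. normN N (\<lambda>k. w' k - w k) < d \<longrightarrow>
          opnorm (normN N) (normEN N) S (\<lambda>h k. M w' h k - M w h k) \<le> e"
    proof (intro exI[of _ "c0 * dd"] conjI ballI impI)
      show "c0 * dd > 0" using c0 dd by simp
      fix w' assume w': "w' \<in> S" and wd: "normN N (\<lambda>k. w' k - w k) < c0 * dd"
      define x' where "x' = H w'"
      have x': "x' \<in> S" "F x' = w'" using HS[OF w'] by (auto simp: x'_def)
      have "c0 * normN N (\<lambda>k. x' k - x k) < c0 * dd"
        using dist_H[OF w w'] wd by (simp add: x_def x'_def)
      then have xx: "normN N (\<lambda>k. x' k - x k) < dd" using c0 by simp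
      have gk: "\<bar>g' k (x' k) - g' k (x k)\<bar> \<le> e1" if k: "k \<in> {1..N-1}" for k
      proof -
        have "\<bar>x' k - x k\<bar> < dd" using coord_le[OF EN_diff[OF x'(1)[unfolded S_def] x(1)[unfolded S_def]], of k] xx by simp
        then show ?thesis using dd(2) k by force
      qed
      show "opnorm (normN N) (normEN N) S (\<lambda>h k. M w' h k - M w h k) \<le> e"
      proof (rule opnorm_le[OF _ EN_zero[of N, folded S_def]])
        fix h assume h: "h \<in> S" and h1: "normN N h \<le> 1"
        define u where "u = M w h"
        define u' where "u' = M w' h"
        have u: "u \<in> S" "L x u = h" using LM(2)[OF h, of w] by (auto simp: u_def x_def)
        have u': "u' \<in> S" "L x' u' = h" using LM(2)[OF h, of w'] by (auto simp: u'_def x'_def)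
        define v where "v = (\<lambda>k. L x u' k - L x' u' k)"
        have Lu'S: "L x u' \<in> S" "L x' u' \<in> S" using linx[of x] linx[of x'] u'(1) unfolding lin_on_def by blast+
        have vS: "v \<in> S" unfolding v_def using Lu'S by (simp add: S_def EN_diff)
        have "L x (\<lambda>k. u' k - u k) = (\<lambda>k. L x u' k - L x u k)"
          by (rule lin_diff[OF linx u'(1) u(1)]) (simp add: S_def EN_scale_all)
        then have "L x (\<lambda>k. u' k - u k) = v" using u u' by (simp add: v_def)
        then have Bv: "M w v = (\<lambda>k. u' k - u k)"
          using LM(3)[of "\<lambda>k. u' k - u k" w] u'(1) u(1) by (simp add: S_def EN_diff x_def)
        have "c0 * normN N u' \<le> normN N h" using lowx[OF u'(1), of x'] u'(2) by simp
        then have nu': "normN N u' \<le> 1 / c0" using h1 c0 by (simp add: field_simps)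
        have vk: "\<forall>k\<in>{1..N-1}. \<bar>v k\<bar> \<le> e1 * (1 / c0)"
        proof
          fix k assume k: "k \<in> {1..N-1}"
          have "v k = - ((g' k (x k) - g' k (x' k)) * u' k) / (real N)\<^sup>2"
            using k N by (simp add: v_def L_def Op_def field_simps)
          then have "\<bar>v k\<bar> = \<bar>g' k (x' k) - g' k (x k)\<bar> * \<bar>u' k\<bar> / (real N)\<^sup>2"
            by (simp only: abs_divide abs_minus_cancel abs_mult abs_minus_commute) simp
          also have "\<dots> \<le> \<bar>g' k (x' k) - g' k (x k)\<bar> * \<bar>u' k\<bar>"
            using divide_left_mono[of 1 "(real N)\<^sup>2" "\<bar>g' k (x' k) - g' k (x k)\<bar> * \<bar>u' k\<bar>"] N by simp
          also have "\<dots> \<le> e1 * (1 / c0)"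
            using gk[OF k] coord_le[OF u'(1)[unfolded S_def], of k] nu' by (intro mult_mono) auto
          finally show "\<bar>v k\<bar> \<le> e1 * (1 / c0)" .
        qed
        have "normN N v \<le> real N * (e1 * (1 / c0))" by (rule sum_card_bound[OF vk]) (use e1 c0 in auto)
        have "normEN N (\<lambda>k. M w' h k - M w h k) = normEN N (M w v)" by (simp add: Bv u_def u'_def)
        also have "\<dots> \<le> C * normN N v" by (rule LM(4)[OF vS])
        also have "\<dots> \<le> C * (real N * (e1 * (1 / c0)))"
          using \<open>normN N v \<le> _\<close> C by (intro mult_left_mono) auto
        also have "\<dots> = e" using C c0 N by (simp add: e1_def field_simps)
        finally show "normEN N (\<lambda>k. M w' h k - M w h k) \<le> e" .
      qed simp
    qed
  qed
qed

theorem theorem6: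
  fixes N :: nat and f fx :: "real \<Rightarrow> real \<Rightarrow> real"
  assumes N: "N \<ge> 2"
    and f_cont: "continuous_on ({0..1} \<times> UNIV) (\<lambda>(t, x). f t x)"
    and fx_deriv: "\<forall>t\<in>{0..1}. \<forall>x. (f t has_real_derivative fx t x) (at x)"
    and fx_cont: "continuous_on ({0..1} \<times> UNIV) (\<lambda>(t, x). fx t x)"
    and growth: "\<exists>A B. 0 < A \<and> A < 1 \<and> 0 < B \<and>
                   (\<forall>t\<in>{0..1}. \<forall>x. \<bar>f t x\<bar> \<le> A * \<bar>x\<bar> + B)"
    and fx_inf: "bdd_below ((\<lambda>(t, x). fx t x) ` ({0..1} \<times> UNIV))"
                "(INF p\<in>{0..1} \<times> UNIV. fx (fst p) (snd p)) > -1"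
  shows "diffeo_on (normEN N) (normN N) (EN N) (DN N f)"
proof -
  have N1: "1 \<le> N" using N by simp
  define m where "m = (INF p\<in>{0..1} \<times> UNIV. fx (fst p) (snd p))"
  have m: "m > -1" using fx_inf(2) by (simp add: m_def)
  have bdd: "bdd_below ((\<lambda>p. fx (fst p) (snd p)) ` ({0..1} \<times> UNIV))"
    using fx_inf(1) by (simp add: case_prod_beta')
  have lowb: "m \<le> fx t s" if "t \<in> {0..1}" for t s
    unfolding m_def using cINF_lower[OF bdd, of "(t, s)"] that by simp
  have tI: "real k / real N \<in> {0..1}" if "k \<in> {1..N-1}" for k
    using that N1 by auto
  have der: "\<forall>k\<in>{1..N-1}. \<forall>s. (f (real k / real N) has_real_derivative fx (real k / real N) s) (at s)
      \<and> m \<le> fx (real k / real N) s"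
    using fx_deriv lowb tI by blast
  have gc: "\<forall>k\<in>{1..N-1}. continuous_on UNIV (fx (real k / real N))"
  proof
    fix k assume k: "k \<in> {1..N-1}"
    have "continuous_on UNIV (\<lambda>s. (\<lambda>(t, x). fx t x) (real k / real N, s))"
      by (rule continuous_on_compose2[OF fx_cont]) (use tI[OF k] in \<open>auto intro!: continuous_intros\<close>)
    then show "continuous_on UNIV (fx (real k / real N))" by simp
  qed
  have der': "\<forall>k\<in>{1..N-1}. \<forall>s. (f (real k / real N) has_real_derivative fx (real k / real N) s) (at s)"
    using der by blast
  show ?thesis
    unfolding diffeo_on_def DN_Op
    using BIJ_Op(1)[OF N1 m der] C1_Op[OF N1 der' gc] INV_C1[OF N1 m der gc] by blast
qed

end
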